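(* Let $(\alpha,\beta)$ be an admissible, non-null pair. If there is no $x\in(0,1)$ with $\pi_x(\alpha)=\pi_x(\beta)$, then for every $x\in(0,1)$ the map $\pi_x:\Omega_{(\alpha,\beta)}\to[0,1]$ is strictly increasing (with respect to the lexicographic order on $\Omega_{(\alpha,\beta)}$).
   Context: $\Omega=\{0,1\}^{\infty}$ is the set of infinite binary strings $\omega=\omega_0\omega_1\cdots$; $S$ is the left shift $S(\omega_0\omega_1\cdots)=\omega_1\omega_2\cdots$; $\preceq$ is the lexicographic order ($\sigma\prec\omega$ iff $\sigma\ne\omega$ and $\sigma_k<\omega_k$ at the first index $k$ where they differ), with intervals $[\alpha,\beta]=\{\omega:\alpha\preceq\omega\preceq\beta\}$ and half-open analogues. A pair $(\alpha,\beta)$ is admissible if $\alpha_0=0,\alpha_1=1,\beta_0=1,\beta_1=0$ and $S^n\alpha\notin(\alpha,\beta]$, $S^n\beta\notin[\alpha,\beta)$ for all $n\ge0$. $\Omega_{(\alpha,\beta,-)}=\{\omega:S^n\omega\notin(\alpha,\beta]\ \forall n\ge0\}$, $\Omega_{(\alpha,\beta,+)}=\{\omega:S^n\omega\notin[\alpha,\beta)\ \forall n\ge0\}$, $\Omega_{(\alpha,\beta)}=\Omega_{(\alpha,\beta,-)}\cup\Omega_{(\alpha,\beta,+)}$. For $\Gamma\subseteq\Omega$, $\Gamma_n=\{\omega_0\cdots\omega_n:\omega\in\Gamma\}$, $h(\Gamma)=\limsup_n\frac1n\ln|\Gamma_n|$; the admissible pair is non-null if $h(\Omega_{(\alpha,\beta)})>0$.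 For $x\in[0,1)$, the projection map is $\pi_x(\omega)=(1-x)\sum_{k=0}^\infty\omega_kx^k$. *)

theory Defs
  imports "HOL-Analysis.Analysis" "HOL-Library.Liminf_Limsup"
begin

text \<open>Infinite binary strings are modelled as functions nat => bool
  (True = digit 1, False = digit 0); Omega is the whole type.\<close>

type_synonym bseq = "nat \<Rightarrow> bool"

definition digit :: "bool \<Rightarrow> real" where
  "digit b = (if b then 1 else 0)"

definition shiftn :: "nat \<Rightarrow> bseq \<Rightarrow> bseq" where
  "shiftn n w = (\<lambda>k. w (k + n))"

definition lex_less :: "bseq \<Rightarrow> bseq \<Rightarrow> bool" where
  "lex_less s w \<longleftrightarrow> s \<noteq> w \<and> (\<exists>k. (\<forall>i<k. s i = w i) \<and> \<not> s k \<and> w k)"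

definition lex_le :: "bseq \<Rightarrow> bseq \<Rightarrow> bool" where
  "lex_le s w \<longleftrightarrow> s = w \<or> lex_less s w"

definition admissible :: "bseq \<Rightarrow> bseq \<Rightarrow> bool" where
  "admissible a b \<longleftrightarrow> \<not> a 0 \<and> a 1 \<and> b 0 \<and> \<not> b 1 \<and>
     (\<forall>n. \<not> (lex_less a (shiftn n a) \<and> lex_le (shiftn n a) b)) \<and>
     (\<forall>n. \<not> (lex_le a (shiftn n b) \<and> lex_less (shiftn n b) b))"

definition Omega_minus :: "bseq \<Rightarrow> bseq \<Rightarrow> bseq set" where
  "Omega_minus a b = {w. \<forall>n. \<not> (lex_less a (shiftn n w) \<and> lex_le (shiftn n w) b)}"

definition Omega_plus :: "bseq \<Rightarrow> bseq \<Rightarrow> bseq set" where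
  "Omega_plus a b = {w. \<forall>n. \<not> (lex_le a (shiftn n w) \<and> lex_less (shiftn n w) b)}"

definition Omega_ab :: "bseq \<Rightarrow> bseq \<Rightarrow> bseq set" where
  "Omega_ab a b = Omega_minus a b \<union> Omega_plus a b"

definition prefixes :: "bseq set \<Rightarrow> nat \<Rightarrow> bool list set" where
  "prefixes G n = (\<lambda>w. map w [0..<Suc n]) ` G"

definition entropy :: "bseq set \<Rightarrow> ereal" where
  "entropy G = limsup (\<lambda>n. ereal (ln (real (card (prefixes G n))) / real n))"

definition nonnull :: "bseq \<Rightarrow> bseq \<Rightarrow> bool" where
  "nonnull a b \<longleftrightarrow> entropy (Omega_ab a b) > 0"

definition proj :: "real \<Rightarrow> bseq \<Rightarrow> real" where
  "proj x w = (1 - x) * (\<Sum>k. digit (w k) * x ^ k)"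

end

theory Submission
  imports Defs
begin

definition ser :: "real \<Rightarrow> bseq \<Rightarrow> real" where
  "ser x w = (\<Sum>k. digit (w k) * x ^ k)"

lemma digit_bounds: "0 \<le> digit b" "digit b \<le> 1"
  by (auto simp: digit_def)

lemma summable_ser: assumes "0 \<le> x" "x < 1"
  shows "summable (\<lambda>k. digit (w k) * x ^ k)"
proof (rule summable_comparison_test[where g="\<lambda>k. x ^ k"])
  show "\<exists>N. \<forall>n\<ge>N. norm (digit (w n) * x ^ n) \<le> x ^ n"
    using assms by (auto simp: digit_def)
  show "summable (\<lambda>k. x ^ k)" using assms by simp
qed

lemma ser_bounds: assumes "0 \<le> x" "x < 1"
  shows "0 \<le> ser x w" "ser x w \<le> 1 / (1 - x)"
proof -
  show "0 \<le> ser x w" unfolding ser_def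
    using assms summable_ser[OF assms] by (intro suminf_nonneg) (auto simp: digit_def)
  have "ser x w \<le> (\<Sum>k. x ^ k)" unfolding ser_def
    using assms summable_ser[OF assms] by (intro suminf_le) (auto simp: digit_def)
  then show "ser x w \<le> 1 / (1 - x)" using suminf_geometric[of x] assms by simp
qed

lemma ser_shift: assumes "0 \<le> x" "x < 1"
  shows "ser x w = (\<Sum>k<j. digit (w k) * x ^ k) + x ^ j * ser x (shiftn j w)"
proof -
  have s: "summable (\<lambda>k. digit (w k) * x ^ k)" by (rule summable_ser[OF assms])
  have "(\<Sum>n. digit (w (n + j)) * x ^ (n + j)) = (\<Sum>n. x ^ j * (digit (shiftn j w n) * x ^ n))"
    by (simp add: shiftn_def power_add mult_ac)
  also have "\<dots> = x ^ j * ser x (shiftn j w)"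
    unfolding ser_def by (rule suminf_mult[OF summable_ser[OF assms]])
  finally show ?thesis unfolding ser_def using suminf_split_initial_segment[OF s, of j] by simp
qed

lemma proj_diff: assumes "0 \<le> x" "x < 1" "\<forall>i<j. s i = w i"
  shows "proj x w - proj x s = x ^ j * (proj x (shiftn j w) - proj x (shiftn j s))"
proof -
  have "(\<Sum>k<j. digit (w k) * x ^ k) = (\<Sum>k<j. digit (s k) * x ^ k)"
    using assms(3) by (intro sum.cong) auto
  then show ?thesis unfolding proj_def ser_def[symmetric]
    using ser_shift[OF assms(1,2), of w j] ser_shift[OF assms(1,2), of s j]
    by (simp add: algebra_simps)
qed

lemma proj_bounds: assumes "0 \<le> x" "x < 1"
  shows "\<not> w 0 \<Longrightarrow> 0 \<le> proj x w \<and> proj x w \<le> x"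
    and "w 0 \<Longrightarrow> 1 - x \<le> proj x w \<and> proj x w \<le> 1"
proof -
  have e: "proj x w = (1 - x) * digit (w 0) + x * ((1 - x) * ser x (shiftn 1 w))"
    unfolding proj_def ser_def[symmetric] using ser_shift[OF assms, of w 1]
    by (simp add: algebra_simps)
  have b1: "0 \<le> (1 - x) * ser x (shiftn 1 w)" using ser_bounds[OF assms] assms by simp
  have "(1 - x) * ser x (shiftn 1 w) \<le> (1 - x) * (1 / (1 - x))"
    using ser_bounds[OF assms] assms by (intro mult_left_mono) auto
  then have b2: "(1 - x) * ser x (shiftn 1 w) \<le> 1" using assms by simp
  have b3: "x * ((1 - x) * ser x (shiftn 1 w)) \<le> x" using b2 assms
    by (simp add: mult_left_le)
  have b4: "0 \<le> x * ((1 - x) * ser x (shiftn 1 w))" using b1 assms by simp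
  show "\<not> w 0 \<Longrightarrow> 0 \<le> proj x w \<and> proj x w \<le> x" using e b3 b4 by (simp add: digit_def)
  show "w 0 \<Longrightarrow> 1 - x \<le> proj x w \<and> proj x w \<le> 1" using e b3 b4 by (simp add: digit_def)
qed

lemma ser_diff: assumes "0 \<le> y" "y \<le> x" "x < 1"
  shows "0 \<le> ser x w - ser y w" "ser x w - ser y w \<le> (x - y) / ((1 - x) * (1 - y))"
proof -
  have sx: "summable (\<lambda>k. digit (w k) * x ^ k)" using assms by (intro summable_ser) auto
  have sy: "summable (\<lambda>k. digit (w k) * y ^ k)" using assms by (intro summable_ser) auto
  have d: "ser x w - ser y w = (\<Sum>k. digit (w k) * x ^ k - digit (w k) * y ^ k)"
    unfolding ser_def by (rule suminf_diff[OF sx sy])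
  have pm: "\<And>k. y ^ k \<le> x ^ k" using assms by (intro power_mono) auto
  have sd: "summable (\<lambda>k. digit (w k) * x ^ k - digit (w k) * y ^ k)" using sx sy by (rule summable_diff)
  show "0 \<le> ser x w - ser y w" unfolding d
    using pm by (intro suminf_nonneg[OF sd]) (auto simp: digit_def)
  have gx: "summable (\<lambda>k. x ^ k)" "summable (\<lambda>k. y ^ k)" using assms by auto
  have "ser x w - ser y w \<le> (\<Sum>k. x ^ k - y ^ k)" unfolding d
    using pm by (intro suminf_le[OF _ sd summable_diff[OF gx]]) (auto simp: digit_def)
  also have "\<dots> = 1 / (1 - x) - 1 / (1 - y)"
    using suminf_diff[OF gx] suminf_geometric[of x] suminf_geometric[of y] assms by simp
  also have "\<dots> = (x - y) / ((1 - x) * (1 - y))" using assms by (simp add: field_simps)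
  finally show "ser x w - ser y w \<le> (x - y) / ((1 - x) * (1 - y))" .
qed

lemma proj_lip_aux: assumes "0 \<le> y" "y \<le> x" "x < 1"
  shows "\<bar>proj x w - proj y w\<bar> \<le> 2 * (x - y) / (1 - x)"
proof -
  have e: "proj x w - proj y w = (1 - x) * (ser x w - ser y w) + (y - x) * ser y w"
    unfolding proj_def ser_def[symmetric] by (simp add: algebra_simps)
  have y1: "y < 1" using assms by simp
  have a1: "0 \<le> (1 - x) * (ser x w - ser y w)" using ser_diff[OF assms] assms by simp
  have "(1 - x) * (ser x w - ser y w) \<le> (1 - x) * ((x - y) / ((1 - x) * (1 - y)))"
    using ser_diff[OF assms] assms by (intro mult_left_mono) auto
  also have "\<dots> = (x - y) / (1 - y)"
  proof -
    have h: "1 - x \<noteq> 0" using assms by auto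
    show ?thesis by (simp only: times_divide_eq_right mult_divide_mult_cancel_left[OF h])
  qed
  also have "\<dots> \<le> (x - y) / (1 - x)" using assms by (intro divide_left_mono) auto
  finally have a2: "(1 - x) * (ser x w - ser y w) \<le> (x - y) / (1 - x)" .
  have c0: "0 \<le> ser y w" "ser y w \<le> 1 / (1 - y)" using ser_bounds[OF assms(1) y1] by auto
  have "(x - y) * ser y w \<le> (x - y) * (1 / (1 - y))" using c0 assms by (intro mult_left_mono) auto
  also have "\<dots> \<le> (x - y) / (1 - x)" using assms by (simp add: divide_left_mono)
  finally have a3: "(x - y) * ser y w \<le> (x - y) / (1 - x)" .
  have a4: "0 \<le> (x - y) * ser y w" using c0 assms by simp
  have e2: "proj x w - proj y w = (1 - x) * (ser x w - ser y w) - (x - y) * ser y w"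
    unfolding e by (simp add: algebra_simps)
  have "\<bar>proj x w - proj y w\<bar> \<le> (x - y) / (1 - x) + (x - y) / (1 - x)"
    unfolding e2 using a1 a2 a3 a4 by (simp only: abs_le_iff) linarith
  then show ?thesis by (simp add: field_simps)
qed

lemma proj_lip: assumes "0 \<le> x" "0 \<le> y" "x \<le> r" "y \<le> r" "r < 1"
  shows "\<bar>proj x w - proj y w\<bar> \<le> 2 * \<bar>x - y\<bar> / (1 - r)"
proof (cases "y \<le> x")
  case True
  have "\<bar>proj x w - proj y w\<bar> \<le> 2 * (x - y) / (1 - x)" using True assms by (intro proj_lip_aux) auto
  also have "\<dots> \<le> 2 * \<bar>x - y\<bar> / (1 - r)" using True assms by (intro frac_le) auto
  finally show ?thesis .
next
  case False
  have "\<bar>proj y w - proj x w\<bar> \<le> 2 * (y - x) / (1 - y)" using False assms by (intro proj_lip_aux) auto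
  also have "\<dots> \<le> 2 * \<bar>x - y\<bar> / (1 - r)" using False assms by (intro frac_le) auto
  finally show ?thesis by (simp add: abs_minus_commute)
qed


lemma lex_less_iff: "lex_less s w \<longleftrightarrow> (\<exists>k. (\<forall>i<k. s i = w i) \<and> \<not> s k \<and> w k)"
  unfolding lex_less_def by auto

lemma lex_total: assumes "s \<noteq> w" shows "lex_less s w \<or> lex_less w s"
proof -
  have "\<exists>k. s k \<noteq> w k" using assms by auto
  define k where "k = (LEAST k. s k \<noteq> w k)"
  have k1: "s k \<noteq> w k" unfolding k_def by (rule LeastI_ex) fact
  have k2: "\<forall>i<k. s i = w i" unfolding k_def using not_less_Least by blast
  show ?thesis
  proof (cases "s k")
    case True then show ?thesis using k1 k2 unfolding lex_less_iff
      by (intro disjI2 exI[of _ k]) auto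
  next
    case False then show ?thesis using k1 k2 unfolding lex_less_iff
      by (intro disjI1 exI[of _ k]) auto
  qed
qed

lemma lex_not_less: "\<not> lex_less a u \<Longrightarrow> lex_le u a"
  using lex_total[of u a] unfolding lex_le_def by auto

lemma shiftn_0[simp]: "shiftn 0 w = w" by (simp add: shiftn_def)
lemma shiftn_shiftn[simp]: "shiftn n (shiftn j w) = shiftn (n + j) w"
  by (simp add: shiftn_def add.assoc)
lemma shiftn_at0[simp]: "shiftn j w 0 = w j" by (simp add: shiftn_def)

lemma Omega_shift: "u \<in> Omega_ab a b \<Longrightarrow> shiftn j u \<in> Omega_ab a b"
  unfolding Omega_ab_def Omega_minus_def Omega_plus_def by auto

lemma adm_in: assumes "admissible a b" shows "a \<in> Omega_ab a b" "b \<in> Omega_ab a b"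
  using assms unfolding admissible_def Omega_ab_def Omega_minus_def Omega_plus_def by auto

lemma adm_digits: assumes "admissible a b" shows "\<not> a 0" "b 0"
  using assms unfolding admissible_def by auto

lemma L1: assumes "admissible a b" "u \<in> Omega_ab a b" "\<not> u 0"
  shows "lex_le u a"
proof -
  have ub: "lex_less u b" unfolding lex_less_iff using assms adm_digits[OF assms(1)]
    by (intro exI[of _ 0]) auto
  show ?thesis
  proof (cases "u \<in> Omega_minus a b")
    case True
    then have "\<not> (lex_less a (shiftn 0 u) \<and> lex_le (shiftn 0 u) b)" unfolding Omega_minus_def by blast
    then have "\<not> (lex_less a u \<and> lex_le u b)" by simp
    then show ?thesis using ub lex_not_less unfolding lex_le_def by blast
  next
    case False
    then have "u \<in> Omega_plus a b" using assms(2) unfolding Omega_ab_def by auto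
    then have "\<not> (lex_le a (shiftn 0 u) \<and> lex_less (shiftn 0 u) b)" unfolding Omega_plus_def by blast
    then have "\<not> (lex_le a u \<and> lex_less u b)" by simp
    then show ?thesis using ub lex_not_less unfolding lex_le_def by blast
  qed
qed

lemma L2: assumes "admissible a b" "v \<in> Omega_ab a b" "v 0"
  shows "lex_le b v"
proof -
  have av: "lex_less a v" unfolding lex_less_iff using assms adm_digits[OF assms(1)]
    by (intro exI[of _ 0]) auto
  show ?thesis
  proof (cases "v \<in> Omega_minus a b")
    case True
    then have "\<not> (lex_less a (shiftn 0 v) \<and> lex_le (shiftn 0 v) b)" unfolding Omega_minus_def by blast
    then have "\<not> (lex_less a v \<and> lex_le v b)" by simp
    then show ?thesis using av lex_not_less unfolding lex_le_def by blast
  next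
    case False
    then have "v \<in> Omega_plus a b" using assms(2) unfolding Omega_ab_def by auto
    then have "\<not> (lex_le a (shiftn 0 v) \<and> lex_less (shiftn 0 v) b)" unfolding Omega_plus_def by blast
    then have "\<not> (lex_le a v \<and> lex_less v b)" by simp
    then show ?thesis using av lex_not_less unfolding lex_le_def by blast
  qed
qed

definition good :: "bseq \<Rightarrow> bseq \<Rightarrow> real \<Rightarrow> bool" where
  "good a b x \<longleftrightarrow> (\<forall>u\<in>Omega_ab a b. \<not> u 0 \<longrightarrow> proj x u \<le> proj x a) \<and>
                   (\<forall>v\<in>Omega_ab a b. v 0 \<longrightarrow> proj x b \<le> proj x v)"

lemma lemK: assumes adm: "admissible a b" and x: "0 \<le> x" "x < 1"
  and hu: "\<forall>u\<in>Omega_ab a b. \<not> u 0 \<longrightarrow> proj x u \<le> proj x a + c"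
  and hv: "\<forall>v\<in>Omega_ab a b. v 0 \<longrightarrow> proj x b \<le> proj x v + c"
  and hd: "2 * c \<le> proj x b - proj x a"
  shows "good a b x"
  unfolding good_def
proof (intro conjI ballI impI)
  fix u assume u: "u \<in> Omega_ab a b" "\<not> u 0"
  have "lex_le u a" by (rule L1[OF adm u])
  show "proj x u \<le> proj x a"
  proof (cases "u = a")
    case False
    then have "lex_less u a" using \<open>lex_le u a\<close> unfolding lex_le_def by auto
    then obtain j where j: "\<forall>i<j. u i = a i" "\<not> u j" "a j" unfolding lex_less_iff by auto
    have e: "proj x a - proj x u = x ^ j * (proj x (shiftn j a) - proj x (shiftn j u))"
      by (rule proj_diff[OF x j(1)])
    have sa: "shiftn j a \<in> Omega_ab a b" by (rule Omega_shift[OF adm_in(1)[OF adm]])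
    have su: "shiftn j u \<in> Omega_ab a b" by (rule Omega_shift[OF u(1)])
    have "proj x b \<le> proj x (shiftn j a) + c"
      using hv[rule_format, OF sa] j(3) by simp
    moreover have "proj x (shiftn j u) \<le> proj x a + c"
      using hu[rule_format, OF su] j(2) by simp
    ultimately have "0 \<le> proj x (shiftn j a) - proj x (shiftn j u)" using hd by linarith
    then have "0 \<le> x ^ j * (proj x (shiftn j a) - proj x (shiftn j u))" using x by simp
    then show ?thesis using e by linarith
  qed simp
next
  fix v assume v: "v \<in> Omega_ab a b" "v 0"
  have "lex_le b v" by (rule L2[OF adm v])
  show "proj x b \<le> proj x v"
  proof (cases "v = b")
    case False
    then have "lex_less b v" using \<open>lex_le b v\<close> unfolding lex_le_def by auto
    then obtain j where j: "\<forall>i<j. b i = v i" "\<not> b j" "v j" unfolding lex_less_iff by auto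
    have e: "proj x v - proj x b = x ^ j * (proj x (shiftn j v) - proj x (shiftn j b))"
      by (rule proj_diff[OF x j(1)])
    have sv: "shiftn j v \<in> Omega_ab a b" by (rule Omega_shift[OF v(1)])
    have sb: "shiftn j b \<in> Omega_ab a b" by (rule Omega_shift[OF adm_in(2)[OF adm]])
    have "proj x b \<le> proj x (shiftn j v) + c"
      using hv[rule_format, OF sv] j(3) by simp
    moreover have "proj x (shiftn j b) \<le> proj x a + c"
      using hu[rule_format, OF sb] j(2) by simp
    ultimately have "0 \<le> proj x (shiftn j v) - proj x (shiftn j b)" using hd by linarith
    then have "0 \<le> x ^ j * (proj x (shiftn j v) - proj x (shiftn j b))" using x by simp
    then show ?thesis using e by linarith
  qed simp
qed

lemma good_small: assumes adm: "admissible a b" and x: "0 \<le> x" "x \<le> 1/4"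
  shows "good a b x"
proof (rule lemK[OF adm, where c = x])
  show "0 \<le> x" "x < 1" using x by auto
  have pa: "0 \<le> proj x a" "proj x a \<le> x" using proj_bounds(1)[of x a] adm_digits[OF adm] x by auto
  have pb: "1 - x \<le> proj x b" "proj x b \<le> 1" using proj_bounds(2)[of x b] adm_digits[OF adm] x by auto
  show "\<forall>u\<in>Omega_ab a b. \<not> u 0 \<longrightarrow> proj x u \<le> proj x a + x"
  proof (intro ballI impI)
    fix u :: bseq assume "\<not> u 0"
    then have "proj x u \<le> x" using proj_bounds(1)[of x u] x by auto
    then show "proj x u \<le> proj x a + x" using pa by linarith
  qed
  show "\<forall>v\<in>Omega_ab a b. v 0 \<longrightarrow> proj x b \<le> proj x v + x"
  proof (intro ballI impI)
    fix v :: bseq assume "v 0"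
    then have "1 - x \<le> proj x v" using proj_bounds(2)[of x v] x by auto
    then show "proj x b \<le> proj x v + x" using pb by linarith
  qed
  show "2 * x \<le> proj x b - proj x a" using pa pb x by linarith
qed

lemma proj_cont: assumes "r < 1" shows "continuous_on {0..r} (\<lambda>x. proj x w)"
  unfolding continuous_on_iff
proof (intro ballI allI impI)
  fix x e :: real assume x: "x \<in> {0..r}" and e: "0 < e"
  have r: "0 < 1 - r" using assms by simp
  show "\<exists>d>0. \<forall>x'\<in>{0..r}. dist x' x < d \<longrightarrow> dist (proj x' w) (proj x w) < e"
  proof (intro exI[of _ "e * (1 - r) / 2"] conjI ballI impI)
    show "0 < e * (1 - r) / 2" using e r by simp
    fix x' assume x': "x' \<in> {0..r}" "dist x' x < e * (1 - r) / 2"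
    have "\<bar>proj x' w - proj x w\<bar> \<le> 2 * \<bar>x' - x\<bar> / (1 - r)"
      using x x' assms by (intro proj_lip) auto
    also have "\<dots> < e"
    proof -
      have "2 * \<bar>x' - x\<bar> < e * (1 - r)" using x'(2) by (simp add: dist_real_def)
      then show ?thesis using r by (simp add: pos_divide_less_eq)
    qed
    finally show "dist (proj x' w) (proj x w) < e" by (simp add: dist_real_def)
  qed
qed

lemma D_pos: assumes adm: "admissible a b"
  and h: "\<not> (\<exists>x\<in>{0<..<1::real}. proj x a = proj x b)"
  and x: "0 < x" "x < 1"
  shows "proj x a < proj x b"
proof (rule ccontr)
  assume "\<not> proj x a < proj x b"
  then have le: "proj x b - proj x a \<le> 0" by simp
  have q: "0 \<le> proj (1/4) b - proj (1/4) a"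
    using proj_bounds(1)[of "1/4" a] proj_bounds(2)[of "1/4" b] adm_digits[OF adm] by auto
  have "x \<ge> 1/4"
  proof (rule ccontr)
    assume "\<not> x \<ge> 1/4"
    moreover have "proj x a \<le> x" using proj_bounds(1)[of x a] adm_digits[OF adm] x by auto
    moreover have "1 - x \<le> proj x b" using proj_bounds(2)[of x b] adm_digits[OF adm] x by auto
    ultimately show False using le by linarith
  qed
  have c: "continuous_on {1/4..x} (\<lambda>x. proj x b - proj x a)"
    by (intro continuous_on_diff; rule continuous_on_subset[OF proj_cont[OF x(2)]]) auto
  obtain z where z: "1/4 \<le> z" "z \<le> x" "proj z b - proj z a = 0"
    using IVT2'[of "\<lambda>x. proj x b - proj x a", OF le q \<open>x \<ge> 1/4\<close> c] by auto
  have "z \<in> {0<..<1}" using z x by auto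
  moreover have "proj z a = proj z b" using z(3) by simp
  ultimately show False using h by blast
qed


lemma proj_01: assumes "0 \<le> x" "x < 1" shows "0 \<le> proj x w" "proj x w \<le> 1"
  using proj_bounds[OF assms, of w] assms by (cases "w 0"; auto)+

lemma good_all: assumes adm: "admissible a b"
  and D: "\<forall>x\<in>{0<..<1::real}. proj x a < proj x b"
  shows "\<forall>x\<in>{0<..<1::real}. good a b x"
proof (rule ccontr)
  define F where "F = {x\<in>{0<..<1::real}. \<not> good a b x}"
  assume "\<not> (\<forall>x\<in>{0<..<1::real}. good a b x)"
  then obtain x0 where x0: "x0 \<in> F" unfolding F_def by auto
  have Fne: "F \<noteq> {}" using x0 by auto
  have bdd: "bdd_below F" unfolding F_def by (rule bdd_belowI[of _ 0]) auto
  define t where "t = Inf F"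
  have Fq: "\<And>x. x \<in> F \<Longrightarrow> 1/4 < x"
  proof (rule ccontr)
    fix x assume "x \<in> F" "\<not> 1/4 < x"
    then show False using good_small[OF adm, of x] unfolding F_def by auto
  qed
  have t1: "1/4 \<le> t" unfolding t_def using Fq Fne by (intro cInf_greatest) (auto intro: less_imp_le)
  have t2: "t < 1" using cInf_lower[OF x0 bdd] x0 unfolding t_def F_def by auto
  define d where "d = proj t b - proj t a"
  have d0: "0 < d" unfolding d_def using D t1 t2 by auto
  have d1: "d \<le> 1" unfolding d_def using proj_01[of t a] proj_01[of t b] t1 t2 by auto
  define \<delta> where "\<delta> = d * (1 - t) / 40"
  have \<delta>0: "0 < \<delta>" unfolding \<delta>_def using d0 t2 by simp
  have "d * (1 - t) \<le> 1 * (1 - t)" using d1 t2 by (intro mult_right_mono) auto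
  then have \<delta>1: "\<delta> \<le> (1 - t) / 40" unfolding \<delta>_def by simp
  have "Inf F < t + \<delta>" using \<delta>0 unfolding t_def by simp
  then obtain x where xF: "x \<in> F" and xlt: "x < t + \<delta>" using cInf_less_iff[OF Fne bdd] by auto
  have xt: "t \<le> x" unfolding t_def using cInf_lower[OF xF bdd] .
  have x1: "x < 1" "0 < x" using xF unfolding F_def by auto
  define y where "y = t - \<delta>"
  have y0: "0 < y" "y < t" using t1 \<delta>1 t2 \<delta>0 unfolding y_def by auto
  have "y \<notin> F"
  proof
    assume "y \<in> F"
    then have "t \<le> y" unfolding t_def using cInf_lower[OF _ bdd] by auto
    then show False using y0 by simp
  qed
  then have gy: "good a b y" using y0 t2 unfolding F_def by auto
  have omx: "1 - x \<ge> 1 - t - \<delta>" using xlt by simp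
  have "d * (1 - x) \<ge> d * (1 - t - \<delta>)" using omx d0 by (intro mult_left_mono) auto
  moreover have "d * \<delta> \<le> 1 * \<delta>" using d1 \<delta>0 by (intro mult_right_mono) auto
  moreover have "d * (1 - t) = 40 * \<delta>" unfolding \<delta>_def by simp
  ultimately have key: "39 * \<delta> \<le> d * (1 - x)" by (simp add: algebra_simps)
  have pos: "0 < 1 - x" using x1 by simp
  have lipy: "\<bar>proj x w - proj y w\<bar> \<le> d / 5" for w
  proof -
    have "\<bar>proj x w - proj y w\<bar> \<le> 2 * \<bar>x - y\<bar> / (1 - x)"
      using y0 xt x1 t1 by (intro proj_lip) auto
    also have "\<dots> \<le> d / 5"
    proof -
      have "2 * \<bar>x - y\<bar> \<le> 4 * \<delta>" using xt xlt y0 unfolding y_def by auto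
      then have "2 * \<bar>x - y\<bar> \<le> d * (1 - x) / 5" using key \<delta>0 by linarith
      then show ?thesis using pos by (simp add: pos_divide_le_eq)
    qed
    finally show ?thesis .
  qed
  have lipt: "\<bar>proj x w - proj t w\<bar> \<le> d / 10" for w
  proof -
    have "\<bar>proj x w - proj t w\<bar> \<le> 2 * \<bar>x - t\<bar> / (1 - x)"
      using xt x1 t1 by (intro proj_lip) auto
    also have "\<dots> \<le> d / 10"
    proof -
      have "2 * \<bar>x - t\<bar> \<le> 2 * \<delta>" using xt xlt by auto
      then have "2 * \<bar>x - t\<bar> \<le> d * (1 - x) / 10" using key \<delta>0 by linarith
      then show ?thesis using pos by (simp add: pos_divide_le_eq)
    qed
    finally show ?thesis .
  qed
  have "good a b x"
  proof (rule lemK[OF adm, where c = "2 * d / 5"])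
    show "0 \<le> x" "x < 1" using x1 by auto
    show "\<forall>u\<in>Omega_ab a b. \<not> u 0 \<longrightarrow> proj x u \<le> proj x a + 2 * d / 5"
    proof (intro ballI impI)
      fix u assume u: "u \<in> Omega_ab a b" "\<not> u 0"
      have "proj y u \<le> proj y a" using gy u unfolding good_def by auto
      then show "proj x u \<le> proj x a + 2 * d / 5" using lipy[of u, unfolded abs_le_iff] lipy[of a, unfolded abs_le_iff] by linarith
    qed
    show "\<forall>v\<in>Omega_ab a b. v 0 \<longrightarrow> proj x b \<le> proj x v + 2 * d / 5"
    proof (intro ballI impI)
      fix v assume v: "v \<in> Omega_ab a b" "v 0"
      have "proj y b \<le> proj y v" using gy v unfolding good_def by auto
      then show "proj x b \<le> proj x v + 2 * d / 5" using lipy[of v, unfolded abs_le_iff] lipy[of b, unfolded abs_le_iff] by linarith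
    qed
    show "2 * (2 * d / 5) \<le> proj x b - proj x a"
      using lipt[of a, unfolded abs_le_iff] lipt[of b, unfolded abs_le_iff] d_def by linarith
  qed
  then show False using xF unfolding F_def by auto
qed

theorem lemma1:
  fixes \<alpha> \<beta> :: bseq
  assumes "admissible \<alpha> \<beta>"
    and "nonnull \<alpha> \<beta>"
    and "\<not> (\<exists>x\<in>{0<..<1::real}. proj x \<alpha> = proj x \<beta>)"
  shows "\<forall>x\<in>{0<..<1::real}. \<forall>s\<in>Omega_ab \<alpha> \<beta>. \<forall>w\<in>Omega_ab \<alpha> \<beta>.
           lex_less s w \<longrightarrow> proj x s < proj x w"
proof (intro ballI impI)
  fix x s w assume x: "x \<in> {0<..<1::real}" and s: "s \<in> Omega_ab \<alpha> \<beta>"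
    and w: "w \<in> Omega_ab \<alpha> \<beta>" and sw: "lex_less s w"
  have D: "\<forall>x\<in>{0<..<1::real}. proj x \<alpha> < proj x \<beta>"
    using D_pos[OF assms(1) assms(3)] by auto
  have g: "good \<alpha> \<beta> x" using good_all[OF assms(1) D] x by auto
  obtain k where k: "\<forall>i<k. s i = w i" "\<not> s k" "w k" using sw unfolding lex_less_iff by auto
  have x01: "0 \<le> x" "x < 1" using x by auto
  have e: "proj x w - proj x s = x ^ k * (proj x (shiftn k w) - proj x (shiftn k s))"
    by (rule proj_diff[OF x01 k(1)])
  have "proj x \<beta> \<le> proj x (shiftn k w)"
    using g Omega_shift[OF w, of k] k(3) unfolding good_def by auto
  moreover have "proj x (shiftn k s) \<le> proj x \<alpha>"
    using g Omega_shift[OF s, of k] k(2) unfolding good_def by auto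
  moreover have "proj x \<alpha> < proj x \<beta>" using D x by auto
  ultimately have "0 < proj x (shiftn k w) - proj x (shiftn k s)" by linarith
  moreover have "0 < x ^ k" using x by simp
  ultimately have "0 < proj x w - proj x s" using e by simp
  then show "proj x s < proj x w" by simp
qed

end
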